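(* Suppose Assumption A holds, so that $\mathcal A_e:=I_{\bar n-1}\otimes A-L_e\otimes BC$ is Hurwitz. Let $\bar P_e=\int_0^\infty e^{\mathcal A_e t}(E^\top G\otimes B)(E^\top G\otimes B)^\top e^{\mathcal A_e^\top t}\,dt$ be the edge controllability Gramian and $\bar Q_f=\int_0^\infty e^{\mathcal A_e^\top t}(HF\otimes C)^\top(HF\otimes C)e^{\mathcal A_e t}\,dt$ the edge observability Gramian. Let $\tilde\Pi^c,\tilde\Pi^o\in\mathbb{R}^{(\bar n-1)\times(\bar n-1)}$ be diagonal positive semidefinite matrices satisfying $L_e\tilde\Pi^c+\tilde\Pi^cL_e^\top-E^\top GG^\top E\succeq0$ and $L_e^\top\tilde\Pi^o+\tilde\Pi^oL_e-F^\top H^\top HF\succeq0$. Then $\bar P_e\preceq\tilde\Pi^c\otimes Q^{-1}$ and $\bar Q_f\preceq\tilde\Pi^o\otimes Q$.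
   Context: Subsystem data: $Q=Q^\top\succ0$, $J=-J^\top$, $R=R^\top\succeq0$ in $\mathbb{R}^{n\times n}$, $B\in\mathbb{R}^{n\times m}$, $A=(J-R)Q$, $C=B^\top Q$, with $(A,B,C)$ minimal. Weights $w_{ij}\ge0$ ($i\ne j\in\{1,\dots,\bar n\}$, $\bar n\ge 2$); $L_{ij}=-w_{ij}$ for $i\neq j$, $L_{ii}=\sum_{j\ne i}w_{ij}$; $G\in\mathbb{R}^{\bar n\times\bar m}$, $H\in\mathbb{R}^{\bar p\times\bar n}$. The directed graph $\mathcal G$ on $\{1,\dots,\bar n\}$ has an arc $(i,j)$ iff $w_{ji}>0$; the underlying undirected graph $\mathcal G_u$ has an edge between $i$ and $j$ iff $w_{ij}+w_{ji}>0$. $E$ is an oriented incidence matrix of $\mathcal G_u$ (the column for an edge between $i$ and $j$ oriented from $i$ to $j$ is $e_i-e_j$) and $F$ is the matrix of the same size whose corresponding column is $w_{ij}e_i-w_{ji}e_j$ (so $L=FE^\top$). The edge Laplacian is $L_e=E^\top F$. A directed rooted spanning tree is a subgraph of $\mathcal G$ that is a directed tree containing all vertices in which every vertex except one root has exactly one incoming arc. Assumption A: (i) $\mathcal G_u$ is a tree; (ii) $\mathcal G$ contains a directed rooted spanning tree as a subgraph. $\otimes$ is the Kronecker product; $X\preceq Y$ means $Y-X$ is positive semidefinite. *)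

theory Defs
  imports "HOL-Analysis.Analysis"
begin

section \<open>Matrix notions (matrices are real^'c^'r : 'r rows, 'c columns)\<close>

fun mpow :: "real^'n^'n \<Rightarrow> nat \<Rightarrow> real^'n^'n" where
  "mpow M 0 = mat 1"
| "mpow M (Suc k) = M ** mpow M k"

definition mexp :: "real^'n^'n \<Rightarrow> real^'n^'n" where
  "mexp M = (\<Sum>k. (1 / fact k) *\<^sub>R mpow M k)"

definition psd :: "real^'n^'n \<Rightarrow> bool" where
  "psd M \<longleftrightarrow> transpose M = M \<and> (\<forall>x. 0 \<le> x \<bullet> (M *v x))"

definition pd :: "real^'n^'n \<Rightarrow> bool" where
  "pd M \<longleftrightarrow> transpose M = M \<and> (\<forall>x. x \<noteq> 0 \<longrightarrow> 0 < x \<bullet> (M *v x))"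

definition loewner_le :: "real^'n^'n \<Rightarrow> real^'n^'n \<Rightarrow> bool" where
  "loewner_le X Y \<longleftrightarrow> psd (Y - X)"

definition skew :: "real^'n^'n \<Rightarrow> bool" where
  "skew M \<longleftrightarrow> transpose M = - M"

definition is_diagonal :: "real^'n^'n \<Rightarrow> bool" where
  "is_diagonal M \<longleftrightarrow> (\<forall>i j. i \<noteq> j \<longrightarrow> M $ i $ j = 0)"

definition kron :: "real^'b^'a \<Rightarrow> real^'d^'c \<Rightarrow> real^('b \<times> 'd)^('a \<times> 'c)" where
  "kron X Y = (\<chi> r c. X $ fst r $ fst c * Y $ snd r $ snd c)"

definition controllable :: "real^'n^'n \<Rightarrow> real^'m^'n \<Rightarrow> bool" where
  "controllable A B \<longleftrightarrow>
     span {(mpow A k ** B) *v u | k u. k < CARD('n)} = (UNIV :: (real^'n) set)"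

definition observable :: "real^'n^'n \<Rightarrow> real^'n^'p \<Rightarrow> bool" where
  "observable A C \<longleftrightarrow> controllable (transpose A) (transpose C)"

definition minimal :: "real^'n^'n \<Rightarrow> real^'m^'n \<Rightarrow> real^'n^'m \<Rightarrow> bool" where
  "minimal A B C \<longleftrightarrow> controllable A B \<and> observable A C"

section \<open>Graph notions; weights w i j for i \<noteq> j (diagonal values unused)\<close>

definition laplacian :: "('v::finite \<Rightarrow> 'v \<Rightarrow> real) \<Rightarrow> real^'v^'v" where
  "laplacian w = (\<chi> i j. if i = j then (\<Sum>k\<in>UNIV - {i}. w i k) else - w i j)"

definition uadj :: "('v \<Rightarrow> 'v \<Rightarrow> real) \<Rightarrow> 'v \<Rightarrow> 'v \<Rightarrow> bool" where
  "uadj w i j \<longleftrightarrow> i \<noteq> j \<and> w i j + w j i > 0"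

definition ugraph_connected :: "('v \<Rightarrow> 'v \<Rightarrow> real) \<Rightarrow> bool" where
  "ugraph_connected w \<longleftrightarrow> (\<forall>i j. (i, j) \<in> {(a, b). uadj w a b}\<^sup>*)"

definition ugraph_acyclic :: "('v \<Rightarrow> 'v \<Rightarrow> real) \<Rightarrow> bool" where
  "ugraph_acyclic w \<longleftrightarrow>
     \<not> (\<exists>vs. 3 \<le> length vs \<and> distinct vs \<and>
            (\<forall>i < length vs. uadj w (vs ! i) (vs ! ((i + 1) mod length vs))))"

definition ugraph_tree :: "('v \<Rightarrow> 'v \<Rightarrow> real) \<Rightarrow> bool" where
  "ugraph_tree w \<longleftrightarrow> ugraph_connected w \<and> ugraph_acyclic w"

text \<open>Directed graph G: arc (i,j) iff w j i > 0.  A directed rooted spanning tree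
  subgraph: a root r and, for every other vertex v, a unique incoming arc (par v, v)
  of G, such that following parents from any vertex reaches the root (so the
  chosen arcs form a directed tree containing all vertices).\<close>
definition has_rooted_spanning_tree :: "('v \<Rightarrow> 'v \<Rightarrow> real) \<Rightarrow> bool" where
  "has_rooted_spanning_tree w \<longleftrightarrow>
     (\<exists>r par. (\<forall>v. v \<noteq> r \<longrightarrow> par v \<noteq> v \<and> w v (par v) > 0) \<and>
              (\<forall>v. \<exists>k. (par ^^ k) v = r))"

text \<open>The edges of G_u are enumerated by the type 'e; edge e joins src e and tgt e,
  oriented from src e to tgt e.\<close>
definition edge_enum :: "('v \<Rightarrow> 'v \<Rightarrow> real) \<Rightarrow> ('e \<Rightarrow> 'v) \<Rightarrow> ('e \<Rightarrow> 'v) \<Rightarrow> bool" where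
  "edge_enum w src tgt \<longleftrightarrow>
     (\<forall>e. uadj w (src e) (tgt e)) \<and>
     (\<forall>e e'. {src e, tgt e} = {src e', tgt e'} \<longrightarrow> e = e') \<and>
     (\<forall>i j. uadj w i j \<longrightarrow> (\<exists>e. {src e, tgt e} = {i, j}))"

definition incidence :: "('e \<Rightarrow> 'v) \<Rightarrow> ('e \<Rightarrow> 'v) \<Rightarrow> real^'e^'v" where
  "incidence src tgt = (\<chi> i e. if i = src e then 1 else if i = tgt e then -1 else 0)"

definition weighted_incidence ::
  "('v \<Rightarrow> 'v \<Rightarrow> real) \<Rightarrow> ('e \<Rightarrow> 'v) \<Rightarrow> ('e \<Rightarrow> 'v) \<Rightarrow> real^'e^'v" where
  "weighted_incidence w src tgt =
     (\<chi> i e. if i = src e then w (src e) (tgt e)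
             else if i = tgt e then - w (tgt e) (src e) else 0)"

end

theory Submission
  imports Defs
begin


typedef (overloaded) ('n::finite) sqm = "UNIV :: ((real^'n) \<Rightarrow>\<^sub>L (real^'n)) set" by simp
setup_lifting type_definition_sqm

instantiation sqm :: (finite) real_normed_vector
begin
lift_definition norm_sqm :: "'a sqm \<Rightarrow> real" is norm .
lift_definition minus_sqm :: "'a sqm \<Rightarrow> 'a sqm \<Rightarrow> 'a sqm" is "(-)" .
lift_definition plus_sqm :: "'a sqm \<Rightarrow> 'a sqm \<Rightarrow> 'a sqm" is "(+)" .
lift_definition uminus_sqm :: "'a sqm \<Rightarrow> 'a sqm" is "uminus" .
lift_definition zero_sqm :: "'a sqm" is "0" .
lift_definition scaleR_sqm :: "real \<Rightarrow> 'a sqm \<Rightarrow> 'a sqm" is "scaleR" .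
definition dist_sqm :: "'a sqm \<Rightarrow> 'a sqm \<Rightarrow> real"
  where "dist_sqm a b = norm (a - b)"
definition uniformity_sqm :: "('a sqm \<times> 'a sqm) filter" where
  "uniformity_sqm = (INF e\<in>{0 <..}. principal {(x, y). dist x y < e})"
definition open_sqm :: "'a sqm set \<Rightarrow> bool"
  where "open_sqm S = (\<forall>x\<in>S. \<forall>\<^sub>F (x', y) in uniformity. x' = x \<longrightarrow> y \<in> S)"
definition sgn_sqm :: "'a sqm \<Rightarrow> 'a sqm"
  where "sgn_sqm x = scaleR (inverse (norm x)) x"
instance
  apply standard
  unfolding dist_sqm_def open_sqm_def sgn_sqm_def uniformity_sqm_def
  apply (rule refl | (transfer, force simp: norm_triangle_ineq algebra_simps))+
  done
end

instantiation sqm :: (finite) real_normed_algebra_1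
begin
lift_definition times_sqm :: "'a sqm \<Rightarrow> 'a sqm \<Rightarrow> 'a sqm" is "(o\<^sub>L)" .
lift_definition one_sqm :: "'a sqm" is "id_blinfun" .
instance
proof
  show "(0::'a sqm) \<noteq> 1"
  proof (transfer)
    show "(0::(real^'a) \<Rightarrow>\<^sub>L (real^'a)) \<noteq> id_blinfun"
    proof
      assume h: "(0::(real^'a) \<Rightarrow>\<^sub>L (real^'a)) = id_blinfun"
      have "blinfun_apply (0::(real^'a) \<Rightarrow>\<^sub>L (real^'a)) 1 = 1" by (subst h) simp
      then show False by simp
    qed
  qed
  show "norm (1::'a sqm) = 1"
    by transfer (rule norm_blinfun_id)
qed (transfer; (rule blinfun_eqI; simp add: blinfun.bilinear_simps norm_blinfun_compose)?; simp add: norm_blinfun_compose)+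
end


lemma dist_sqm_rep: "dist x y = dist (Rep_sqm x) (Rep_sqm y)"
  unfolding dist_sqm_def dist_norm by transfer simp

instance sqm :: (finite) banach
proof
  fix X :: "nat \<Rightarrow> 'a sqm"
  assume "Cauchy X"
  then have "Cauchy (\<lambda>n. Rep_sqm (X n))"
    unfolding Cauchy_def dist_sqm_rep .
  then obtain L where L: "(\<lambda>n. Rep_sqm (X n)) \<longlonglongrightarrow> L"
    using convergent_def Cauchy_convergent_iff by blast
  have "X \<longlonglongrightarrow> Abs_sqm L"
    using L unfolding tendsto_iff dist_sqm_rep by (simp add: Abs_sqm_inverse)
  then show "convergent X" unfolding convergent_def by blast
qed

lift_definition tosq :: "real^'n^'n \<Rightarrow> ('n::finite) sqm" is "\<lambda>M. Blinfun (\<lambda>x. M *v x)" .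
lift_definition tomat :: "('n::finite) sqm \<Rightarrow> real^'n^'n" is "\<lambda>f. matrix (blinfun_apply f)" .

lemma blin_mv: "blinfun_apply (Blinfun (\<lambda>x. M *v x)) = (\<lambda>x. (M::real^'n::finite^'m::finite) *v x)"
  by (rule bounded_linear_Blinfun_apply) (simp add: linear_conv_bounded_linear)

lemma tomat_tosq[simp]: "tomat (tosq M) = M"
  by transfer (simp add: blin_mv)

lemma tosq_mult: "tosq (M ** N) = tosq M * tosq N"
  by transfer (rule blinfun_eqI, simp add: blin_mv matrix_vector_mul_assoc)

lemma tosq_one: "tosq (mat 1) = 1"
  by transfer (rule blinfun_eqI, simp add: bounded_linear_Blinfun_apply[OF bounded_linear_ident])

lemma tosq_scaleR: "tosq (c *\<^sub>R M) = c *\<^sub>R tosq M"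
  by transfer (rule blinfun_eqI, simp add: blin_mv scaleR_matrix_vector_assoc scaleR_blinfun.rep_eq)

lemma tomat_mult: "tomat (S * T) = tomat S ** tomat T"
proof transfer
  fix S T :: "(real^'n) \<Rightarrow>\<^sub>L (real^'n)"
  have "blinfun_apply (S o\<^sub>L T) = blinfun_apply S o blinfun_apply T"
    by (rule ext) simp
  then show "matrix (blinfun_apply (S o\<^sub>L T)) = matrix (blinfun_apply S) ** matrix (blinfun_apply T)"
    by (simp add: matrix_compose bounded_linear.linear[OF blinfun.bounded_linear_right])
qed

lemma tomat_one: "tomat 1 = mat 1"
proof transfer
  have "blinfun_apply (id_blinfun::(real^'n) \<Rightarrow>\<^sub>L (real^'n)) = id" by (rule ext) simp
  then show "matrix (blinfun_apply (id_blinfun::(real^'n) \<Rightarrow>\<^sub>L (real^'n))) = mat 1"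
    by (simp add: matrix_id_mat_1[unfolded id_def])
qed

lemma tomat_scaleR: "tomat (r *\<^sub>R x) = r *\<^sub>R tomat x"
    by transfer (simp add: matrix_def vec_eq_iff blinfun.bilinear_simps)

lemma bounded_linear_tomat: "bounded_linear (tomat :: 'n::finite sqm \<Rightarrow> real^'n^'n)"
proof (rule bounded_linear_intro[where K="real CARD('n) * real CARD('n)"])
  fix x y :: "'n sqm" and r :: real
  show "tomat (x + y) = tomat x + tomat y"
    by transfer (simp add: matrix_def vec_eq_iff blinfun.bilinear_simps)
  show "tomat (r *\<^sub>R x) = r *\<^sub>R tomat x"
    by transfer (simp add: matrix_def vec_eq_iff blinfun.bilinear_simps)
  show "norm (tomat x) \<le> norm x * (real CARD('n) * real CARD('n))"
  proof transfer
    fix f :: "(real^'n) \<Rightarrow>\<^sub>L (real^'n)"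
    have e: "\<bar>matrix (blinfun_apply f) $ i $ j\<bar> \<le> norm f" for i j
    proof -
      have "\<bar>matrix (blinfun_apply f) $ i $ j\<bar> = \<bar>blinfun_apply f (axis j 1) $ i\<bar>"
        by (simp add: matrix_def)
      also have "\<dots> \<le> norm (blinfun_apply f (axis j 1))" by (rule component_le_norm_cart)
      also have "\<dots> \<le> norm f * norm (axis j (1::real))" by (rule norm_blinfun)
      finally show ?thesis by (simp add: norm_axis_1)
    qed
    have r: "norm (matrix (blinfun_apply f) $ i) \<le> real CARD('n) * norm f" for i
    proof -
      have "norm (matrix (blinfun_apply f) $ i) \<le> (\<Sum>j\<in>UNIV. \<bar>matrix (blinfun_apply f) $ i $ j\<bar>)"
        by (rule norm_le_l1_cart)
      also have "\<dots> \<le> (\<Sum>j\<in>(UNIV::'n set). norm f)" by (rule sum_mono) (rule e)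
      finally show ?thesis by simp
    qed
    have "norm (matrix (blinfun_apply f)) \<le> (\<Sum>i\<in>UNIV. norm (matrix (blinfun_apply f) $ i))"
      by (simp add: norm_vec_def L2_set_le_sum)
    also have "\<dots> \<le> (\<Sum>i\<in>(UNIV::'n set). real CARD('n) * norm f)" by (rule sum_mono) (rule r)
    finally show "norm (matrix (blinfun_apply f)) \<le> norm f * (real CARD('n) * real CARD('n))"
      by (simp add: algebra_simps)
  qed
qed

lemma tosq_pow: "tosq (mpow M k) = tosq M ^ k"
  by (induction k) (simp_all add: tosq_one tosq_mult)

lemma mexp_sums: "(\<lambda>k. (1 / fact k) *\<^sub>R mpow M k) sums tomat (exp (tosq M))"
proof -
  have "(\<lambda>k. tosq M ^ k /\<^sub>R fact k) sums exp (tosq M)"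
    unfolding exp_def by (rule summable_sums) (rule summable_exp_generic)
  from bounded_linear.sums[OF bounded_linear_tomat this]
  show ?thesis by (simp add: tosq_pow[symmetric] tomat_scaleR divide_inverse_commute)
qed

lemma mexp_tomat: "mexp M = tomat (exp (tosq M))"
  unfolding mexp_def using mexp_sums by (rule sums_unique[symmetric])


lemma tomat_exp_deriv:
  "((\<lambda>t. tomat (exp (t *\<^sub>R S))) has_vector_derivative tomat (S * exp (t *\<^sub>R S))) (at t within U)"
  by (rule bounded_linear.has_vector_derivative[OF bounded_linear_tomat])
     (rule has_vector_derivative_at_within[OF exp_scaleR_has_vector_derivative_left])

lemma mexp_deriv:
  "((\<lambda>t. mexp (t *\<^sub>R M)) has_vector_derivative (M ** mexp (t *\<^sub>R M))) (at t within U)"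
  using tomat_exp_deriv[of "tosq M" t U]
  by (simp add: mexp_tomat tosq_scaleR tomat_mult)

lemma tosq_zero: "tosq 0 = 0"
  by (metis tosq_scaleR scale_zero_left)

lemma mexp_zero: "mexp (0 *\<^sub>R M) = mat 1"
  by (simp add: mexp_tomat tosq_zero tomat_one)

lemma mpow_comm: "mpow M k ** M = M ** mpow M k"
  by (induction k) (simp_all add: matrix_mul_assoc[symmetric])

lemma mpow_transpose: "transpose (mpow M k) = mpow (transpose M) k"
  by (induction k) (simp_all add: matrix_transpose_mul mpow_comm)

lemma bounded_linear_transpose: "bounded_linear (transpose :: real^'n::finite^'m::finite \<Rightarrow> real^'m^'n)"
  by (rule linear_conv_bounded_linear[THEN iffD1], rule linearI)
     (simp_all add: transpose_def vec_eq_iff)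

lemma mexp_transpose: "transpose (mexp M) = mexp (transpose M)"
proof -
  from bounded_linear.sums[OF bounded_linear_transpose mexp_sums[of M]]
  have "(\<lambda>k. (1 / fact k) *\<^sub>R mpow (transpose M) k) sums transpose (mexp M)"
    by (simp add: transpose_scalar mpow_transpose mexp_tomat)
  then show ?thesis unfolding mexp_def by (rule sums_unique)
qed


lemma mexp_0: "mexp 0 = mat 1"
  using mexp_zero[of 0] by simp

lemma bl_mv_left: "bounded_linear (\<lambda>M::real^'n::finite^'m::finite. M *v x)"
  by (rule linear_conv_bounded_linear[THEN iffD1], rule linearI)
     (simp_all add: matrix_vector_mult_add_rdistrib scaleR_matrix_vector_assoc)

lemma bl_mv_right: "bounded_linear (\<lambda>v. (K::real^'n::finite^'m::finite) *v v)"
  by (rule linear_conv_bounded_linear[THEN iffD1]) simp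

lemma transpose_diff: "transpose ((A::real^'n^'m) - B) = transpose A - transpose B"
  by (simp add: transpose_def vec_eq_iff)

lemma transpose_zero: "transpose (0::real^'n^'m) = 0"
  by (simp add: transpose_def vec_eq_iff)

lemma gram_le:
  fixes A X K :: "real^'n::finite^'n"
  assumes X: "psd X" and Ks: "transpose K = K" and Kp: "\<And>y. 0 \<le> y \<bullet> (K *v y)"
    and L: "\<And>y. y \<bullet> ((A ** X + X ** transpose A + K) *v y) \<le> 0"
  shows "loewner_le (integral {0..} (\<lambda>t::real. mexp (t *\<^sub>R A) ** K ** mexp (t *\<^sub>R transpose A))) X"
proof -
  define f where "f t = mexp (t *\<^sub>R A) ** K ** mexp (t *\<^sub>R transpose A)" for t :: real
  define P where "P = integral {0..} f"
  have trmexp: "transpose (mexp (t *\<^sub>R A)) = mexp (t *\<^sub>R transpose A)" for t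
    by (simp add: mexp_transpose transpose_scalar)
  have trmexp2: "transpose (mexp (t *\<^sub>R transpose A)) = mexp (t *\<^sub>R A)" for t
    by (simp add: mexp_transpose transpose_scalar)
  have fsym: "transpose (f t) = f t" for t
    unfolding f_def by (simp add: matrix_transpose_mul trmexp trmexp2 Ks matrix_mul_assoc)
  have Psym: "transpose P = P"
  proof (cases "f integrable_on {0..}")
    case True
    have "transpose P = integral {0..} (transpose o f)"
      unfolding P_def by (rule integral_linear[OF True bounded_linear_transpose, symmetric])
    also have "transpose o f = f" using fsym by (simp add: o_def)
    finally show ?thesis by (simp add: P_def)
  next
    case False then show ?thesis by (simp add: P_def not_integrable_integral transpose_zero)
  qed
  have Xs: "transpose X = X" and Xp: "\<And>y. 0 \<le> y \<bullet> (X *v y)" using X by (auto simp: psd_def)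
  have quad: "x \<bullet> (P *v x) \<le> x \<bullet> (X *v x)" for x
  proof -
    define u where "u t = mexp (t *\<^sub>R transpose A) *v x" for t :: real
    define g where "g t = x \<bullet> (f t *v x)" for t
    have gu: "g t = u t \<bullet> (K *v u t)" for t
    proof -
      have "g t = x \<bullet> (mexp (t *\<^sub>R A) *v (K *v u t))"
        by (simp add: g_def f_def u_def matrix_vector_mul_assoc matrix_mul_assoc)
      also have "\<dots> = (x v* mexp (t *\<^sub>R A)) \<bullet> (K *v u t)" by (simp add: dot_lmul_matrix)
      also have "x v* mexp (t *\<^sub>R A) = u t"
        by (simp add: u_def trmexp[symmetric])
      finally show ?thesis .
    qed
    have g0: "0 \<le> g t" for t using Kp gu by simp
    have du: "(u has_vector_derivative (transpose A *v u t)) (at t)" for t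
      using bounded_linear.has_vector_derivative[OF bl_mv_left[of x] mexp_deriv[of "transpose A" t UNIV]]
      unfolding u_def[abs_def] by (simp add: matrix_vector_mul_assoc)
    have geq: "g = (\<lambda>t. u t \<bullet> (K *v u t))" using gu by (simp add: fun_eq_iff)
    have dg: "(g has_vector_derivative (u t \<bullet> (K *v (transpose A *v u t)) + (transpose A *v u t) \<bullet> (K *v u t))) (at t)" for t
      unfolding geq
      by (rule bounded_bilinear.has_vector_derivative[OF bounded_bilinear_inner du
            bounded_linear.has_vector_derivative[OF bl_mv_right du]])
    have cg: "continuous_on S g" for S
      using dg has_vector_derivative_continuous continuous_at_imp_continuous_on by blast
    define h where "h t = u t \<bullet> (X *v u t)" for t
    define h' where "h' t = u t \<bullet> ((A ** X + X ** transpose A) *v u t)" for t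
    have dh: "(h has_vector_derivative h' t) (at t)" for t
    proof -
      have aux: "(X ** transpose A) *v v = X *v (v v* A)" for v
        by (simp add: matrix_vector_mul_assoc[symmetric])
      have "((\<lambda>t. u t \<bullet> (X *v u t)) has_vector_derivative
          (u t \<bullet> (X *v (transpose A *v u t)) + (transpose A *v u t) \<bullet> (X *v u t))) (at t)"
        by (rule bounded_bilinear.has_vector_derivative[OF bounded_bilinear_inner du
            bounded_linear.has_vector_derivative[OF bl_mv_right du]])
      moreover have "u t \<bullet> (X *v (transpose A *v u t)) + (transpose A *v u t) \<bullet> (X *v u t) = h' t"
        by (simp add: aux h'_def dot_lmul_matrix matrix_vector_mult_add_rdistrib inner_add_right
              matrix_vector_mul_assoc)
      ultimately show ?thesis unfolding h_def by simp
    qed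
    have hg: "h' t \<le> - g t" for t
    proof -
      have "u t \<bullet> ((A ** X + X ** transpose A + K) *v u t) = h' t + g t"
        unfolding h'_def gu by (simp add: matrix_vector_mult_add_rdistrib inner_add_right)
      then show ?thesis using L[of "u t"] by linarith
    qed
    have core: "integral {0..T} g \<le> x \<bullet> (X *v x)" if "0 \<le> T" for T
    proof -
      have "(h' has_integral h T - h 0) {0..T}"
        by (rule fundamental_theorem_of_calculus[OF that]) (rule has_vector_derivative_at_within[OF dh])
      then have i1: "((\<lambda>t. - h' t) has_integral -(h T - h 0)) {0..T}" by (rule has_integral_neg)
      have "integral {0..T} g \<le> -(h T - h 0)"
        by (rule has_integral_le[OF integrable_integral[OF integrable_continuous_interval[OF cg]] i1])
           (subst le_minus_iff, rule hg)
      moreover have "h 0 = x \<bullet> (X *v x)" by (simp add: h_def u_def mexp_0)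
      moreover have "0 \<le> h T" using Xp by (simp add: h_def)
      ultimately show ?thesis by linarith
    qed
    show ?thesis
    proof (cases "f integrable_on {0..}")
      case False then show ?thesis using Xp by (simp add: P_def not_integrable_integral)
    next
      case True
      have bx: "bounded_linear (\<lambda>M. x \<bullet> (M *v x))"
        using bounded_linear_compose[OF bounded_linear_inner_right bl_mv_left] .
      have Pg: "x \<bullet> (P *v x) = integral {0..} g"
        using integral_linear[OF True bx] by (simp add: P_def g_def[abs_def] o_def)
      define fk where "fk k t = (if t \<in> {0..real k} then g t else 0)" for k :: nat and t
      have ik: "integral {0..} (fk k) = integral {0..real k} g" for k
      proof -
        have "{0..real k} \<inter> {0..} = {0..real k}" by auto
        then show ?thesis unfolding fk_def by (subst integral_restrict_Int) simp
      qed
      have mc: "g integrable_on {0..} \<and> (\<lambda>k. integral {0..} (fk k)) \<longlonglongrightarrow> integral {0..} g"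
      proof (rule monotone_convergence_increasing)
        show "fk k integrable_on {0..}" for k
        proof -
          have "{0..real k} \<inter> {0..} = {0..real k}" by auto
          then show ?thesis unfolding fk_def
            by (subst integrable_restrict_Int) (simp add: integrable_continuous_interval cg)
        qed
        show "fk k t \<le> fk (Suc k) t" if "t \<in> {0..}" for k t using g0 by (auto simp: fk_def)
        show "(\<lambda>k. fk k t) \<longlonglongrightarrow> g t" if "t \<in> {0..}" for t
        proof -
          obtain N :: nat where N: "t \<le> real N" using real_arch_simple by blast
          have "eventually (\<lambda>k. fk k t = g t) sequentially"
            unfolding eventually_sequentially
          proof (intro exI allI impI)
            fix k assume "N \<le> k"
            then have "t \<le> real k" using N by linarith
            then show "fk k t = g t" using that by (simp add: fk_def)
          qed
          then show ?thesis by (rule tendsto_eventually)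
        qed
        have "integral {0..} (fk k) \<in> {0..x \<bullet> (X *v x)}" for k
        proof -
          have "0 \<le> integral {0..real k} g"
            by (rule integral_nonneg[OF integrable_continuous_interval[OF cg]]) (use g0 in auto)
          then show ?thesis using core[of "real k"] ik[of k] by simp
        qed
        then show "bounded (range (\<lambda>k. integral {0..} (fk k)))"
          by (intro bounded_subset[OF bounded_closed_interval[of 0 "x \<bullet> (X *v x)"]]) auto
      qed
      then have "integral {0..} g \<le> x \<bullet> (X *v x)"
        using ik core by (intro LIMSEQ_le_const2[of "\<lambda>k. integral {0..} (fk k)"]) auto
      then show ?thesis using Pg by simp
    qed
  qed
  have "psd (X - P)"
    unfolding psd_def
    using quad by (simp add: transpose_diff Xs Psym matrix_vector_mult_diff_rdistrib inner_diff_right)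
  then show ?thesis unfolding loewner_le_def P_def f_def .
qed



lemma sum_pair: "(\<Sum>p\<in>UNIV. f p) = (\<Sum>i\<in>UNIV. \<Sum>k\<in>UNIV. f (i, k))"
  by (simp add: sum.cartesian_product UNIV_Times_UNIV)

lemma kron_mult:
  fixes A :: "real^'b::finite^'a::finite" and B :: "real^'d::finite^'c::finite"
    and C :: "real^'e::finite^'b" and D :: "real^'f::finite^'d"
  shows "kron A B ** kron C D = kron (A ** C) (B ** D)"
  by (simp add: kron_def matrix_matrix_mult_def vec_eq_iff sum_pair sum_product algebra_simps)

lemma kron_transpose: "transpose (kron A B) = kron (transpose A) (transpose B)"
  by (simp add: kron_def transpose_def vec_eq_iff)

lemma ifmult: "(if P then a else 0) * (b::real) = (if P then a * b else 0)" by simp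

lemma multif: "(a::real) * (if P then b else 0) = (if P then a * b else 0)" by simp

lemma quad_expand:
  "(x::real^'a::finite) \<bullet> (W *v x) = (\<Sum>p\<in>UNIV. x$p * (\<Sum>q\<in>UNIV. W$p$q * x$q))"
  by (simp add: inner_vec_def matrix_vector_mult_def)

lemma diag_nonneg:
  assumes "psd (D::real^'a::finite^'a)" shows "0 \<le> D$i$i"
proof -
  have "0 \<le> axis i 1 \<bullet> (D *v axis i 1)" using assms by (simp add: psd_def)
  also have "axis i 1 \<bullet> (D *v axis i 1) = D$i$i"
    by (simp add: quad_expand axis_def ifmult multif)
  finally show ?thesis .
qed

lemma kron_diag_quad:
  fixes D :: "real^'a::finite^'a" and R :: "real^'b::finite^'b"
  assumes D: "is_diagonal D" "psd D" and R: "\<And>y. 0 \<le> y \<bullet> (R *v y)"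
  shows "0 \<le> x \<bullet> (kron D R *v x)"
proof -
  define y where "y i = (\<chi> k. x $ (i, k))" for i
  have "x \<bullet> (kron D R *v x) = (\<Sum>i\<in>UNIV. D$i$i * (y i \<bullet> (R *v y i)))"
  proof -
    have "x \<bullet> (kron D R *v x) =
        (\<Sum>i\<in>UNIV. \<Sum>k\<in>UNIV. x$(i,k) * (\<Sum>j\<in>UNIV. \<Sum>l\<in>UNIV. D$i$j * R$k$l * x$(j,l)))"
      by (simp add: quad_expand sum_pair kron_def)
    also have "\<dots> = (\<Sum>i\<in>UNIV. \<Sum>k\<in>UNIV. x$(i,k) * (\<Sum>l\<in>UNIV. D$i$i * R$k$l * x$(i,l)))"
    proof -
      have "(\<Sum>j\<in>UNIV. \<Sum>l\<in>UNIV. D$i$j * R$k$l * x$(j,l)) = (\<Sum>l\<in>UNIV. D$i$i * R$k$l * x$(i,l))" for i k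
      proof -
        have "(\<Sum>j\<in>UNIV. \<Sum>l\<in>UNIV. D$i$j * R$k$l * x$(j,l))
            = (\<Sum>j\<in>UNIV. if j = i then (\<Sum>l\<in>UNIV. D$i$j * R$k$l * x$(j,l)) else 0)"
          using D(1) by (intro sum.cong) (auto simp: is_diagonal_def)
        then show ?thesis by simp
      qed
      then show ?thesis by simp
    qed
    also have "\<dots> = (\<Sum>i\<in>UNIV. D$i$i * (y i \<bullet> (R *v y i)))"
      by (simp add: quad_expand y_def sum_distrib_left algebra_simps)
    finally show ?thesis .
  qed
  also have "0 \<le> \<dots>"
    by (intro sum_nonneg mult_nonneg_nonneg diag_nonneg[OF D(2)] R)
  finally show ?thesis .
qed

lemma kron_id_quad:
  fixes S :: "real^'a::finite^'a"
  assumes S: "\<And>y. 0 \<le> y \<bullet> (S *v y)"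
  shows "0 \<le> x \<bullet> (kron S (mat 1 :: real^'b::finite^'b) *v x)"
proof -
  define z where "z k = (\<chi> i. x $ (i, k))" for k
  have "x \<bullet> (kron S (mat 1 :: real^'b^'b) *v x) =
      (\<Sum>i\<in>UNIV. \<Sum>k\<in>UNIV. x$(i,k) * (\<Sum>j\<in>UNIV. \<Sum>l\<in>UNIV. S$i$j * (if k = l then 1 else 0) * x$(j,l)))"
    by (simp add: quad_expand sum_pair kron_def mat_def)
  also have "\<dots> = (\<Sum>i\<in>UNIV. \<Sum>k\<in>UNIV. x$(i,k) * (\<Sum>j\<in>UNIV. S$i$j * x$(j,k)))"
    by (simp add: ifmult multif)
  also have "\<dots> = (\<Sum>k\<in>UNIV. z k \<bullet> (S *v z k))"
    by (simp add: quad_expand z_def) (rule sum.swap)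
  also have "0 \<le> \<dots>" by (intro sum_nonneg S)
  finally show ?thesis .
qed

lemma gram_nonneg: "0 \<le> (y::real^'a::finite) \<bullet> ((M ** transpose M) *v y)"
proof -
  have "y \<bullet> ((M ** transpose M) *v y) = y \<bullet> (M *v (transpose M *v y))"
    by (simp only: matrix_vector_mul_assoc)
  also have "\<dots> = (y v* M) \<bullet> (transpose M *v y)" by (rule dot_lmul_matrix[symmetric])
  also have "\<dots> = (transpose M *v y) \<bullet> (transpose M *v y)" by simp
  finally show ?thesis by simp
qed

lemma kron_gram_quad:
  fixes S :: "real^'a::finite^'a" and M :: "real^'c::finite^'b::finite"
  assumes S: "\<And>y. 0 \<le> y \<bullet> (S *v y)"
  shows "0 \<le> x \<bullet> (kron S (M ** transpose M) *v x)"
proof -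
  define W where "W = kron (mat 1 :: real^'a^'a) M"
  have "kron S (M ** transpose M) = W ** kron S (mat 1) ** transpose W"
    by (simp add: W_def kron_transpose kron_mult)
  then have "x \<bullet> (kron S (M ** transpose M) *v x) = (transpose W *v x) \<bullet> (kron S (mat 1) *v (transpose W *v x))"
    by (simp add: dot_lmul_matrix matrix_vector_mul_assoc[symmetric] del: transpose_matrix_vector)
       (simp add: dot_lmul_matrix[symmetric])
  also have "0 \<le> \<dots>" by (rule kron_id_quad[OF S])
  finally show ?thesis .
qed



lemma mm_diff_r: "((A::real^'n::finite^'m) - B) ** C = A ** C - B ** C"
  by (simp add: matrix_matrix_mult_def vec_eq_iff sum_subtractf algebra_simps)
lemma mm_diff_l: "(A::real^'n::finite^'m) ** (B - C) = A ** B - A ** C"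
  by (simp add: matrix_matrix_mult_def vec_eq_iff sum_subtractf algebra_simps)
lemma mm_add_r: "((A::real^'n::finite^'m) + B) ** C = A ** C + B ** C"
  by (simp add: matrix_matrix_mult_def vec_eq_iff sum.distrib algebra_simps)
lemma mm_neg_l: "(- (A::real^'n::finite^'m)) ** B = - (A ** B)"
  by (simp add: matrix_matrix_mult_def vec_eq_iff sum_negf)
lemma mm_neg_r: "(A::real^'n::finite^'m) ** (- B) = - (A ** B)"
  by (simp add: matrix_matrix_mult_def vec_eq_iff sum_negf)
lemma mv_neg: "(- (M::real^'n::finite^'m)) *v y = - (M *v y)"
  by (simp add: matrix_vector_mult_def vec_eq_iff sum_negf)
lemma transpose_add: "transpose ((A::real^'n^'m) + B) = transpose A + transpose B"
  by (simp add: transpose_def vec_eq_iff)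
lemma transpose_neg: "transpose (- (A::real^'n^'m)) = - transpose A"
  by (simp add: transpose_def vec_eq_iff)

lemma pd_inv:
  fixes Q :: "real^'n::finite^'n"
  assumes "pd Q"
  shows "Q ** matrix_inv Q = mat 1" "matrix_inv Q ** Q = mat 1"
proof -
  have "\<forall>x. Q *v x = 0 \<longrightarrow> x = 0"
    using assms unfolding pd_def by (metis inner_zero_right less_irrefl)
  then obtain B where "B ** Q = mat 1" using matrix_left_invertible_ker by blast
  then have "invertible Q" using invertible_left_inverse by blast
  then have "\<exists>A'. Q ** A' = mat 1 \<and> A' ** Q = mat 1" unfolding invertible_def .
  from someI_ex[OF this] show "Q ** matrix_inv Q = mat 1" "matrix_inv Q ** Q = mat 1"
    unfolding matrix_inv_def by auto
qed

lemma pd_inv_sym: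
  fixes Q :: "real^'n::finite^'n"
  assumes "pd Q" shows "transpose (matrix_inv Q) = matrix_inv Q"
proof -
  have Qs: "transpose Q = Q" using assms by (simp add: pd_def)
  have "transpose (matrix_inv Q) ** Q = mat 1"
    using arg_cong[OF pd_inv(1)[OF assms], of transpose] by (simp add: matrix_transpose_mul Qs)
  then have "transpose (matrix_inv Q) ** Q ** matrix_inv Q = matrix_inv Q" by simp
  then show ?thesis by (simp add: matrix_mul_assoc[symmetric] pd_inv(1)[OF assms])
qed

lemma pd_inv_quad:
  fixes Q :: "real^'n::finite^'n"
  assumes "pd Q" shows "0 \<le> y \<bullet> (matrix_inv Q *v y)"
proof -
  define z where "z = matrix_inv Q *v y"
  have y: "y = Q *v z" unfolding z_def by (simp add: matrix_vector_mul_assoc pd_inv(1)[OF assms])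
  have "y \<bullet> (matrix_inv Q *v y) = z \<bullet> (Q *v z)"
    by (simp add: z_def[symmetric]) (simp add: y inner_commute)
  also have "0 \<le> \<dots>" using assms unfolding pd_def by (cases "z = 0") (auto intro: less_imp_le)
  finally show ?thesis .
qed

lemma pd_quad: "pd Q \<Longrightarrow> 0 \<le> y \<bullet> (Q *v y)"
  unfolding pd_def by (cases "y = 0") (auto intro: less_imp_le)

lemma sandwich_quad:
  fixes Q R :: "real^'n::finite^'n"
  assumes "transpose Q = Q" "\<And>y. 0 \<le> y \<bullet> (R *v y)"
  shows "0 \<le> y \<bullet> ((Q ** R ** Q) *v y)"
proof -
  have "y \<bullet> ((Q ** R ** Q) *v y) = y \<bullet> (Q *v (R *v (Q *v y)))"
    by (simp only: matrix_vector_mul_assoc matrix_mul_assoc)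
  also have "\<dots> = (y v* Q) \<bullet> (R *v (Q *v y))" by (rule dot_lmul_matrix[symmetric])
  also have "y v* Q = Q *v y" using assms(1) by (metis transpose_matrix_vector)
  finally show ?thesis using assms(2) by simp
qed

lemma psd_quad: "psd M \<Longrightarrow> 0 \<le> y \<bullet> (M *v y)" by (simp add: psd_def)

lemma double_quad: "(\<And>y. 0 \<le> y \<bullet> (R *v y)) \<Longrightarrow> 0 \<le> y \<bullet> ((R + R) *v (y::real^'n::finite))"
  by (simp only: matrix_vector_mult_add_rdistrib inner_add_right add_nonneg_nonneg)



theorem theorem2:
  fixes Q J R :: "real^'n^'n" and B :: "real^'m^'n"
    and w :: "'v::finite \<Rightarrow> 'v \<Rightarrow> real"
    and src tgt :: "'e::finite \<Rightarrow> 'v"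
    and G :: "real^'k^'v" and H :: "real^'v^'p"
    and Pic Pio :: "real^'e^'e"
  assumes Q: "pd Q" and J: "skew J" and R: "psd R"
    and min: "minimal ((J - R) ** Q) B (transpose B ** Q)"
    and nv: "CARD('v) \<ge> 2"
    and w: "\<And>i j. i \<noteq> j \<Longrightarrow> w i j \<ge> 0"
    and tree: "ugraph_tree w"
    and rst: "has_rooted_spanning_tree w"
    and enum: "edge_enum w src tgt"
    and Pic: "is_diagonal Pic" "psd Pic"
    and Pio: "is_diagonal Pio" "psd Pio"
    and ineq_c: "psd (transpose (incidence src tgt) ** weighted_incidence w src tgt ** Pic
                      + Pic ** transpose (transpose (incidence src tgt) ** weighted_incidence w src tgt)
                      - transpose (incidence src tgt) ** G ** transpose G ** incidence src tgt)"
    and ineq_o: "psd (transpose (transpose (incidence src tgt) ** weighted_incidence w src tgt) ** Pio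
                      + Pio ** (transpose (incidence src tgt) ** weighted_incidence w src tgt)
                      - transpose (weighted_incidence w src tgt) ** transpose H ** H
                          ** weighted_incidence w src tgt)"
  shows "let A = (J - R) ** Q; C = transpose B ** Q;
             E = incidence src tgt; F = weighted_incidence w src tgt;
             Le = transpose E ** F;
             Ae = kron (mat 1 :: real^'e^'e) A - kron Le (B ** C);
             Bc = kron (transpose E ** G) B;
             Co = kron (H ** F) C;
             Pe = integral {0..} (\<lambda>t::real. mexp (t *\<^sub>R Ae) ** Bc ** transpose Bc
                                              ** mexp (t *\<^sub>R transpose Ae));
             Qf = integral {0..} (\<lambda>t::real. mexp (t *\<^sub>R transpose Ae) ** transpose Co ** Co
                                              ** mexp (t *\<^sub>R Ae))
         in loewner_le Pe (kron Pic (matrix_inv Q)) \<and> loewner_le Qf (kron Pio Q)"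
proof -
  define A where "A = (J - R) ** Q"
  define C where "C = transpose B ** Q"
  define E where "E = incidence src tgt"
  define F where "F = weighted_incidence w src tgt"
  define Le where "Le = transpose E ** F"
  define Ae where "Ae = kron (mat 1 :: real^'e^'e) A - kron Le (B ** C)"
  define Bc where "Bc = kron (transpose E ** G) B"
  define Co where "Co = kron (H ** F) C"
  define Qi where "Qi = matrix_inv Q"
  define S1 where "S1 = Le ** Pic + Pic ** transpose Le - transpose E ** G ** transpose G ** E"
  define S2 where "S2 = transpose Le ** Pio + Pio ** Le - transpose F ** transpose H ** H ** F"
  have S1: "psd S1" using ineq_c unfolding S1_def Le_def E_def F_def .
  have S2: "psd S2" using ineq_o unfolding S2_def Le_def E_def F_def .
  have Qs: "transpose Q = Q" using Q by (simp add: pd_def)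
  have Rs: "transpose R = R" using R by (simp add: psd_def)
  have Js: "transpose J = - J" using J by (simp add: skew_def)
  have Pics: "transpose Pic = Pic" using Pic by (simp add: psd_def)
  have Pios: "transpose Pio = Pio" using Pio by (simp add: psd_def)
  have QQi: "Q ** Qi = mat 1" and QiQ: "Qi ** Q = mat 1" using pd_inv[OF Q] by (simp_all add: Qi_def)
  have QQi': "Q ** (Qi ** M) = M" for M :: "real^'q^'n"
    by (simp add: matrix_mul_assoc QQi)
  have QiQ': "Qi ** (Q ** M) = M" for M :: "real^'q^'n"
    by (simp add: matrix_mul_assoc QiQ)
  have Qis: "transpose Qi = Qi" using pd_inv_sym[OF Q] by (simp add: Qi_def)
  have trJR: "transpose (J - R) = - J - R" by (simp add: transpose_diff Js Rs)

  have e1: "Ae ** kron Pic Qi = kron Pic (J - R) - kron (Le ** Pic) (B ** transpose B)"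
    by (simp add: Ae_def A_def C_def mm_diff_r kron_mult matrix_mul_assoc[symmetric] QQi)
  have e2: "kron Pic Qi ** transpose Ae = kron Pic (- J - R) - kron (Pic ** transpose Le) (B ** transpose B)"
    by (simp add: Ae_def A_def C_def transpose_diff kron_transpose mm_diff_l kron_mult
        matrix_transpose_mul Qs QiQ' matrix_mul_assoc[symmetric] trJR Js Rs)
  have e3: "Bc ** transpose Bc = kron (transpose E ** G ** transpose G ** E) (B ** transpose B)"
    by (simp add: Bc_def kron_transpose matrix_transpose_mul kron_mult matrix_mul_assoc)
  have I1: "Ae ** kron Pic Qi + kron Pic Qi ** transpose Ae + Bc ** transpose Bc
      = - (kron Pic (R + R) + kron S1 (B ** transpose B))"
    unfolding e1 e2 e3 S1_def by (simp add: kron_def vec_eq_iff algebra_simps)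
  have c1: "loewner_le (integral {0..} (\<lambda>t::real. mexp (t *\<^sub>R Ae) ** (Bc ** transpose Bc) ** mexp (t *\<^sub>R transpose Ae)))
        (kron Pic Qi)"
  proof (rule gram_le)
    show "psd (kron Pic Qi)"
      unfolding psd_def
      by (simp add: kron_transpose Pics Qis kron_diag_quad[OF Pic] pd_inv_quad[OF Q, folded Qi_def])
    show "transpose (Bc ** transpose Bc) = Bc ** transpose Bc" by (simp add: matrix_transpose_mul)
    show "0 \<le> y \<bullet> ((Bc ** transpose Bc) *v y)" for y by (rule gram_nonneg)
    show "y \<bullet> ((Ae ** kron Pic Qi + kron Pic Qi ** transpose Ae + Bc ** transpose Bc) *v y) \<le> 0" for y
    proof -
      have "0 \<le> y \<bullet> (kron Pic (R + R) *v y)"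
        by (rule kron_diag_quad[OF Pic double_quad[OF psd_quad[OF R]]])
      moreover have "0 \<le> y \<bullet> (kron S1 (B ** transpose B) *v y)"
        by (rule kron_gram_quad[OF psd_quad[OF S1]])
      ultimately show ?thesis
        unfolding I1 by (simp only: mv_neg matrix_vector_mult_add_rdistrib inner_add_right inner_minus_right; linarith?)
    qed
  qed

  have JRQ1: "Q ** (- J) ** Q - Q ** R ** Q = - (Q ** J ** Q) - Q ** R ** Q"
    by (simp only: mm_diff_l mm_diff_r mm_neg_l mm_neg_r)
  have JRQ2: "Q ** (J - R) ** Q = Q ** J ** Q - Q ** R ** Q"
    by (simp only: mm_diff_l mm_diff_r)
  have f1: "transpose Ae ** kron Pio Q = kron Pio (Q ** (- J) ** Q - Q ** R ** Q) - kron (transpose Le ** Pio) (transpose C ** C)"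
    by (simp add: Ae_def A_def C_def transpose_diff kron_transpose mm_diff_r kron_mult
        matrix_transpose_mul Qs trJR Js Rs matrix_mul_assoc)
  have f2: "kron Pio Q ** Ae = kron Pio (Q ** (J - R) ** Q) - kron (Pio ** Le) (transpose C ** C)"
    by (simp add: Ae_def A_def C_def mm_diff_l kron_mult matrix_transpose_mul Qs matrix_mul_assoc)
  have f3: "transpose Co ** Co = kron (transpose F ** transpose H ** H ** F) (transpose C ** C)"
    by (simp add: Co_def kron_transpose matrix_transpose_mul kron_mult matrix_mul_assoc)
  have I2: "transpose Ae ** kron Pio Q + kron Pio Q ** transpose (transpose Ae) + transpose Co ** Co
      = - (kron Pio (Q ** R ** Q + Q ** R ** Q) + kron S2 (transpose C ** transpose (transpose C)))"
    unfolding transpose_transpose f1 f2 f3 S2_def JRQ1 JRQ2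
    by (simp add: kron_def vec_eq_iff algebra_simps)
  have c2: "loewner_le (integral {0..} (\<lambda>t::real. mexp (t *\<^sub>R transpose Ae) ** (transpose Co ** Co)
        ** mexp (t *\<^sub>R transpose (transpose Ae)))) (kron Pio Q)"
  proof (rule gram_le)
    show "psd (kron Pio Q)"
      unfolding psd_def
      by (simp add: kron_transpose Pios Qs kron_diag_quad[OF Pio] pd_quad[OF Q])
    show "transpose (transpose Co ** Co) = transpose Co ** Co" by (simp add: matrix_transpose_mul)
    show "0 \<le> y \<bullet> ((transpose Co ** Co) *v y)" for y
      using gram_nonneg[of y "transpose Co"] by simp
    show "y \<bullet> ((transpose Ae ** kron Pio Q + kron Pio Q ** transpose (transpose Ae) + transpose Co ** Co) *v y) \<le> 0" for y
    proof -
      have "0 \<le> y \<bullet> (kron Pio (Q ** R ** Q + Q ** R ** Q) *v y)"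
        by (rule kron_diag_quad[OF Pio double_quad[OF sandwich_quad[OF Qs psd_quad[OF R]]]])
      moreover have "0 \<le> y \<bullet> (kron S2 (transpose C ** transpose (transpose C)) *v y)"
        by (rule kron_gram_quad[OF psd_quad[OF S2]])
      ultimately show ?thesis
        unfolding I2 by (simp only: mv_neg matrix_vector_mult_add_rdistrib inner_add_right inner_minus_right; linarith?)
    qed
  qed
  show ?thesis
    using c1 c2
    unfolding Let_def A_def[symmetric] C_def[symmetric] E_def[symmetric] F_def[symmetric]
    unfolding Le_def[symmetric] Ae_def[symmetric] Bc_def[symmetric] Co_def[symmetric] Qi_def[symmetric]
    by (simp add: matrix_mul_assoc)
qed

end
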